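(* Consider the algebra of Laurent polynomials in nonzero variables $a,b,c,d,e,f,g,h,i$ with the log-canonical Poisson bracket determined by $\{a,b\}=0,\ \{a,c\}=-\tfrac14 ac,\ \{a,d\}=-\tfrac14 ad,\ \{a,e\}=0,\ \{a,f\}=\tfrac14 af,\ \{a,g\}=-\tfrac14 ag,\ \{a,h\}=\tfrac14 ah,\ \{a,i\}=\tfrac14 ai,$ $\{b,c\}=\tfrac14 bc,\ \{b,d\}=0,\ \{b,e\}=\tfrac14 be,\ \{b,f\}=\tfrac14 bf,\ \{b,g\}=0,\ \{b,h\}=-\tfrac14 bh,\ \{b,i\}=0,$ $\{c,d\}=-\tfrac14 cd,\ \{c,e\}=\tfrac14 ce,\ \{c,f\}=-\tfrac14 cf,\ \{c,g\}=\{c,h\}=0,\ \{c,i\}=\tfrac14 ci,$ $\{d,e\}=-\tfrac14 de,\ \{d,f\}=\{d,g\}=\{d,h\}=0,\ \{d,i\}=\tfrac14 di,$ $\{e,f\}=-\tfrac14 ef,\ \{e,g\}=\{e,h\}=\{e,i\}=0,$ $\{f,g\}=-\tfrac14 fg,\ \{f,h\}=\tfrac14 fh,\ \{f,i\}=0,\ \{g,h\}=\tfrac14 gh,\ \{g,i\}=-\tfrac14 gi,\ \{h,i\}=0$. Then $bdeghi$ is a Casimir element, and it is the only Casimir (so the generic symplectic leaves are $8$-dimensional).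
   Context: A log-canonical bracket is extended from the generators to all Laurent polynomials by bilinearity, antisymmetry and the Leibniz rule. (These are the $\lambda$-lengths of a complete system of arcs on a Riemann sphere with one hole with six bordered cusps — the $PII^{JM}$ case.) *)

theory Defs
  imports "HOL-Library.Poly_Mapping"
begin

datatype var = A | B | C | D | E | F | G | H | I

text \<open>Laurent polynomials in a,...,i with coefficients in 'k:
  finitely supported maps from exponent vectors (var to int) to coefficients.\<close>
type_synonym 'k laurent = "(var \<Rightarrow>\<^sub>0 int) \<Rightarrow>\<^sub>0 'k"

definition lmono :: "(var \<Rightarrow>\<^sub>0 int) \<Rightarrow> 'k::zero_neq_one laurent" where
  "lmono m = Poly_Mapping.single m 1"

definition gen :: "var \<Rightarrow> 'k::zero_neq_one laurent" where
  "gen v = lmono (Poly_Mapping.single v 1)"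

definition gen_inv :: "var \<Rightarrow> 'k::zero_neq_one laurent" where
  "gen_inv v = lmono (Poly_Mapping.single v (-1))"

text \<open>Upper-triangular part of 4 * (log-canonical matrix): {x,y} = (omega4 x y / 4) x y,
  listed for pairs x before y in the order a,b,...,i.\<close>
fun omega_up :: "var \<Rightarrow> var \<Rightarrow> int" where
  "omega_up A B = 0" | "omega_up A C = -1" | "omega_up A D = -1" | "omega_up A E = 0"
| "omega_up A F = 1" | "omega_up A G = -1" | "omega_up A H = 1" | "omega_up A I = 1"
| "omega_up B C = 1" | "omega_up B D = 0" | "omega_up B E = 1" | "omega_up B F = 1"
| "omega_up B G = 0" | "omega_up B H = -1" | "omega_up B I = 0"
| "omega_up C D = -1" | "omega_up C E = 1" | "omega_up C F = -1" | "omega_up C G = 0"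
| "omega_up C H = 0" | "omega_up C I = 1"
| "omega_up D E = -1" | "omega_up D F = 0" | "omega_up D G = 0" | "omega_up D H = 0"
| "omega_up D I = 1"
| "omega_up E F = -1" | "omega_up E G = 0" | "omega_up E H = 0" | "omega_up E I = 0"
| "omega_up F G = -1" | "omega_up F H = 1" | "omega_up F I = 0"
| "omega_up G H = 1" | "omega_up G I = -1"
| "omega_up H I = 0"
| "omega_up _ _ = 0"

fun var_idx :: "var \<Rightarrow> nat" where
  "var_idx A = 0" | "var_idx B = 1" | "var_idx C = 2" | "var_idx D = 3" | "var_idx E = 4"
| "var_idx F = 5" | "var_idx G = 6" | "var_idx H = 7" | "var_idx I = 8"

definition omega4 :: "var \<Rightarrow> var \<Rightarrow> int" where
  "omega4 x y = (if var_idx x < var_idx y then omega_up x y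
                 else if var_idx y < var_idx x then - omega_up y x else 0)"

text \<open>Euler operator x_v d/dx_v: multiplies the coefficient of x^m by m_v.\<close>
definition euler :: "var \<Rightarrow> 'k::ring_1 laurent \<Rightarrow> 'k laurent" where
  "euler v P = Poly_Mapping.mapp (\<lambda>m c. of_int (Poly_Mapping.lookup m v) * c) P"

text \<open>The log-canonical bracket, extended to all Laurent polynomials by bilinearity,
  antisymmetry and the Leibniz rule:
  {P,Q} = sum_{x,y} (omega4 x y / 4) (x d_x P) (y d_y Q).\<close>
definition pbracket :: "'k::field laurent \<Rightarrow> 'k laurent \<Rightarrow> 'k laurent" where
  "pbracket P Q = (\<Sum>x\<in>UNIV. \<Sum>y\<in>UNIV.
      Poly_Mapping.single 0 (of_int (omega4 x y) / 4) * euler x P * euler y Q)"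

definition is_casimir :: "'k::field laurent \<Rightarrow> bool" where
  "is_casimir P \<longleftrightarrow> (\<forall>Q. pbracket P Q = 0)"

text \<open>Elements of the subalgebra generated by a unit u and its inverse w
  (Laurent polynomials in u).\<close>
definition laurent_poly_in :: "'k::comm_ring_1 laurent \<Rightarrow> 'k laurent \<Rightarrow> 'k laurent \<Rightarrow> bool" where
  "laurent_poly_in u w P \<longleftrightarrow> (\<exists>N (p::nat \<Rightarrow> 'k) (q::nat \<Rightarrow> 'k).
      P = (\<Sum>n<N. Poly_Mapping.single 0 (p n) * u ^ n + Poly_Mapping.single 0 (q n) * w ^ n))"

end

theory Submission imports Defs begin

lemma UNIV_var: "(UNIV::var set) = {A,B,C,D,E,F,G,H,I}"
  by (auto intro: var.exhaust)

lemma finite_var[simp]: "finite (UNIV::var set)" by (simp add: UNIV_var)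

definition kerw :: "(var \<Rightarrow>\<^sub>0 int) \<Rightarrow> bool" where
  "kerw m \<longleftrightarrow> (\<forall>y. (\<Sum>x\<in>UNIV. omega4 x y * Poly_Mapping.lookup m x) = 0)"

definition cv :: "int \<Rightarrow> (var \<Rightarrow>\<^sub>0 int)" where
  "cv k = Poly_Mapping.single B k + Poly_Mapping.single D k + Poly_Mapping.single E k
     + Poly_Mapping.single G k + Poly_Mapping.single H k + Poly_Mapping.single I k"

lemma lookup_cv: "Poly_Mapping.lookup (cv k) x = (if x \<in> {B,D,E,G,H,I} then k else 0)"
  by (cases x) (simp_all add: cv_def Poly_Mapping.lookup_add Poly_Mapping.lookup_single)

lemma kerw_iff: "kerw m \<longleftrightarrow> (\<exists>k. m = cv k)"
proof
  assume "kerw m"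
  then have h: "\<And>y. (\<Sum>x\<in>UNIV. omega4 x y * Poly_Mapping.lookup m x) = 0" by (simp add: kerw_def)
  note hs = h[of A] h[of B] h[of C] h[of D] h[of E] h[of F] h[of G] h[of H] h[of I]
  have e: "Poly_Mapping.lookup m A = 0" "Poly_Mapping.lookup m C = 0" "Poly_Mapping.lookup m F = 0"
    "Poly_Mapping.lookup m D = Poly_Mapping.lookup m B" "Poly_Mapping.lookup m E = Poly_Mapping.lookup m B" "Poly_Mapping.lookup m G = Poly_Mapping.lookup m B"
    "Poly_Mapping.lookup m H = Poly_Mapping.lookup m B" "Poly_Mapping.lookup m I = Poly_Mapping.lookup m B"
    using hs by (simp_all add: UNIV_var omega4_def)
  show "\<exists>k. m = cv k"
    by (rule exI[of _ "Poly_Mapping.lookup m B"], rule poly_mapping_eqI, case_tac k)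
       (simp_all add: lookup_cv e)
next
  assume "\<exists>k. m = cv k"
  then obtain k where mk: "m = cv k" by blast
  show "kerw m" unfolding kerw_def
  proof
    fix y show "(\<Sum>x\<in>UNIV. omega4 x y * Poly_Mapping.lookup m x) = 0"
      by (cases y) (simp_all add: mk UNIV_var omega4_def lookup_cv)
  qed
qed

abbreviation lk where "lk \<equiv> Poly_Mapping.lookup"

lemma lookup_smul: "lk (Poly_Mapping.single 0 c * (P::'k::comm_ring_1 laurent)) m = c * lk P m"
  by (simp add: lookup_mult Poly_Mapping.lookup_single when_mult mult_when)

lemma lookup_euler: "lk (euler v (P::'k::ring_1 laurent)) m = of_int (lk m v) * lk P m"
  by (simp add: euler_def lookup_mapp when_def Poly_Mapping.in_keys_iff)

definition Dop :: "var \<Rightarrow> 'k::field laurent \<Rightarrow> 'k laurent" where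
  "Dop y P = (\<Sum>x\<in>UNIV. Poly_Mapping.single 0 (of_int (omega4 x y) / 4) * euler x P)"

lemma lookup_Dop: "lk (Dop y P) m = (of_int (\<Sum>x\<in>UNIV. omega4 x y * lk m x) / 4) * lk P m"
  by (simp add: Dop_def lookup_sum lookup_smul lookup_euler sum_distrib_right sum_divide_distrib mult.assoc)

lemma pbracket_Dop: "pbracket P Q = (\<Sum>y\<in>UNIV. Dop y P * euler y Q)"
  unfolding pbracket_def Dop_def
  by (subst sum.swap) (simp add: sum_distrib_right)

lemma euler_gen: "euler x (gen y :: 'k::ring_1 laurent) = (if x = y then gen y else 0)"
  by (rule poly_mapping_eqI)
     (auto simp: lookup_euler gen_def lmono_def Poly_Mapping.lookup_single when_def)

lemma pbracket_gen: "pbracket P (gen y) = Dop y P * gen y"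
  by (simp add: pbracket_Dop euler_gen if_distrib sum.delta sum.delta' cong: if_cong)

lemma gen_gen_inv: "(gen y :: 'k::comm_ring_1 laurent) * gen_inv y = 1"
proof -
  have "Poly_Mapping.single y (1::int) + Poly_Mapping.single y (-1) = 0"
    by (simp add: Poly_Mapping.single_add[symmetric])
  then show ?thesis by (simp add: gen_def gen_inv_def lmono_def mult_single)
qed

lemma casimir_iff: "is_casimir (P::'k::field_char_0 laurent) \<longleftrightarrow> (\<forall>m\<in>Poly_Mapping.keys P. kerw m)"
proof
  assume c: "is_casimir P"
  show "\<forall>m\<in>Poly_Mapping.keys P. kerw m"
  proof (intro ballI, unfold kerw_def, intro allI)
    fix m y assume m: "m \<in> Poly_Mapping.keys P"
    have "Dop y P * gen y = 0" using c by (simp add: is_casimir_def pbracket_gen[symmetric])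
    then have "Dop y P * gen y * gen_inv y = 0" by simp
    then have "Dop y P = 0" by (simp add: mult.assoc gen_gen_inv)
    then have "lk (Dop y P) m = 0" by simp
    moreover define S where "S = (\<Sum>x\<in>UNIV. omega4 x y * lk m x)"
    ultimately have "of_int S / 4 * lk P m = (0::'k)" by (simp only: lookup_Dop)
    moreover have "lk P m \<noteq> 0" using m by (meson Poly_Mapping.in_keys_iff)
    ultimately have "(of_int S :: 'k) = 0" by simp
    then show "(\<Sum>x\<in>UNIV. omega4 x y * lk m x) = 0" unfolding S_def[symmetric] by (simp only: of_int_eq_0_iff)
  qed
next
  assume k: "\<forall>m\<in>Poly_Mapping.keys P. kerw m"
  have "Dop y P = 0" for y
  proof (rule poly_mapping_eqI)
    fix m
    show "lk (Dop y P) m = lk 0 m"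
    proof (cases "m \<in> Poly_Mapping.keys P")
      case True then show ?thesis using k by (simp add: lookup_Dop kerw_def)
    next
      case False then show ?thesis by (simp add: lookup_Dop Poly_Mapping.in_keys_iff)
    qed
  qed
  then show "is_casimir P" by (simp add: is_casimir_def pbracket_Dop)
qed


lemma lmono_mult: "(lmono a :: 'k::comm_ring_1 laurent) * lmono b = lmono (a + b)"
  by (simp add: lmono_def mult_single)

lemma cv_add: "cv a + cv b = cv (a + b)"
  by (rule poly_mapping_eqI) (simp add: Poly_Mapping.lookup_add lookup_cv)

lemma cv_inj: "cv a = cv b \<longleftrightarrow> a = b"
  by (metis lookup_cv insertI1)

lemma lmono_pow: "(lmono (cv k) :: 'k::comm_ring_1 laurent) ^ n = lmono (cv (int n * k))"
  by (induction n) (simp_all add: lmono_mult cv_add algebra_simps, simp add: lmono_def cv_def)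

lemma smul_lmono: "Poly_Mapping.single 0 c * (lmono m :: 'k::comm_ring_1 laurent) = Poly_Mapping.single m c"
  by (simp add: lmono_def mult_single)

theorem mainTheorem7:
  fixes Cas Cas_inv :: "'k::field_char_0 laurent"
  defines "Cas \<equiv> gen B * gen D * gen E * gen G * gen H * gen I"
      and "Cas_inv \<equiv> gen_inv B * gen_inv D * gen_inv E * gen_inv G * gen_inv H * gen_inv I"
  shows "is_casimir Cas \<and> (\<forall>P::'k laurent. is_casimir P \<longleftrightarrow> laurent_poly_in Cas Cas_inv P)"
proof -
  have Cas: "Cas = lmono (cv 1)"
    unfolding Cas_def by (simp add: gen_def lmono_mult cv_def)
  have Cinv: "Cas_inv = lmono (cv (-1))"
    unfolding Cas_inv_def by (simp add: gen_inv_def lmono_mult cv_def)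
  have kcv: "kerw (cv k)" for k by (auto simp: kerw_iff)
  have c1: "is_casimir Cas" by (simp add: casimir_iff Cas lmono_def kcv)
  have "is_casimir P \<longleftrightarrow> laurent_poly_in Cas Cas_inv P" for P :: "'k laurent"
  proof
    assume "laurent_poly_in Cas Cas_inv P"
    then obtain N p q where P: "P = (\<Sum>n<N. Poly_Mapping.single 0 (p n) * Cas ^ n
        + Poly_Mapping.single 0 (q n) * Cas_inv ^ n)"
      unfolding laurent_poly_in_def by blast
    have P2: "P = (\<Sum>n<N. Poly_Mapping.single (cv (int n)) (p n)
        + Poly_Mapping.single (cv (- int n)) (q n))"
      unfolding P Cas Cinv lmono_pow smul_lmono by simp
    have t: "Poly_Mapping.keys (Poly_Mapping.single (cv a) (x::'k) + Poly_Mapping.single (cv b) y) \<subseteq> range cv"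
      for a b x y
      using Poly_Mapping.keys_add[of "Poly_Mapping.single (cv a) x" "Poly_Mapping.single (cv b) y"]
      by (auto split: if_splits)
    have "Poly_Mapping.keys P \<subseteq> range cv"
      using keys_sum[of "\<lambda>n. Poly_Mapping.single (cv (int n)) (p n)
        + Poly_Mapping.single (cv (- int n)) (q n)" "{..<N}"] t
      unfolding P2[symmetric] by blast
    then show "is_casimir P" by (auto simp: casimir_iff kcv)
  next
    assume c: "is_casimir P"
    hence kc: "\<forall>m\<in>Poly_Mapping.keys P. \<exists>k. m = cv k" by (simp add: casimir_iff kerw_iff)
    define N where "N = Suc (\<Sum>m\<in>Poly_Mapping.keys P. nat \<bar>lk m B\<bar>)"
    have bound: "nat \<bar>lk m B\<bar> < N" if "m \<in> Poly_Mapping.keys P" for m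
      using member_le_sum[of m "Poly_Mapping.keys P" "\<lambda>m. nat \<bar>lk m B\<bar>"] that
      by (simp add: N_def)
    define p where "p n = lk P (cv (int n))" for n
    define q where "q n = (if n = 0 then 0 else lk P (cv (- int n)))" for n
    have "P = (\<Sum>n<N. Poly_Mapping.single (cv (int n)) (p n)
        + Poly_Mapping.single (cv (- int n)) (q n))"
    proof (rule poly_mapping_eqI)
      fix m
      have L: "lk (\<Sum>n<N. Poly_Mapping.single (cv (int n)) (p n)
        + Poly_Mapping.single (cv (- int n)) (q n)) m
        = (\<Sum>n<N. (if cv (int n) = m then p n else 0) + (if cv (- int n) = m then q n else 0))"
        by (simp add: lookup_sum Poly_Mapping.lookup_add Poly_Mapping.lookup_single when_def)
      show "lk P m = lk (\<Sum>n<N. Poly_Mapping.single (cv (int n)) (p n)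
        + Poly_Mapping.single (cv (- int n)) (q n)) m"
      proof (cases "m \<in> Poly_Mapping.keys P")
        case False
        then have z: "lk P m = 0" by (meson Poly_Mapping.in_keys_iff)
        have "(if cv (int n) = m then p n else 0) + (if cv (- int n) = m then q n else 0) = 0" for n
          using z by (auto simp: p_def q_def)
        then show ?thesis unfolding L using z by simp
      next
        case True
        then obtain k where mk: "m = cv k" using kc by blast
        have bk: "nat \<bar>k\<bar> < N" using bound[OF True] by (simp add: mk lookup_cv)
        have "(if cv (int n) = m then p n else 0) + (if cv (- int n) = m then q n else 0)
              = (if n = nat \<bar>k\<bar> then lk P m else 0)" for n
          by (cases "k \<ge> 0") (auto simp: mk cv_inj p_def q_def)
        then show ?thesis unfolding L using bk by simp
      qed
    qed
    then show "laurent_poly_in Cas Cas_inv P"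
      unfolding laurent_poly_in_def Cas Cinv lmono_pow smul_lmono mult_1_right mult_minus1_right by blast
  qed
  with c1 show ?thesis by blast
qed

end
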